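(* Let $G$ be connected with weights $w:E\to\mathbb{R}_{>0}$, let $\pi$ be a vertex order and let $m_P$ be the perfect metric on $G_\pi^*$. Let $R$ be the set of edges $\{x,y\}$ of $G_\pi^*$, where $x$ denotes the lower-ranked endpoint, for which there exists a vertex $z\neq y$ of rank larger than the rank of $x$, adjacent to both $x$ and $y$ in $G_\pi^*$, with $m_P(\{x,y\})=m_P(\{x,z\})+m_P(\{z,y\})$. Then (i) for all $s,t\in V$ there is an up-down $s$–$t$ path in $G_\pi^*$ that uses no edge of $R$ and whose $m_P$-length equals $\mathrm{dist}_I(s,t)$; and (ii) for every edge $\{x,y\}\notin R$ of $G_\pi^*$, the one-edge path $x,y$ is the only up-down $x$–$y$ path in $G_\pi^*$ whose $m_P$-length equals $\mathrm{dist}_I(x,y)$.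
   Context: Let $G=(V,E)$ be a finite simple undirected graph with $n=|V|$ vertices. A vertex order is a bijection $\pi:\{1,\dots,n\}\to V$; the rank of $v$ is $\pi^{-1}(v)$. Contracting a vertex $v$ in a graph means deleting $v$ and its incident edges and adding an edge between every pair of former neighbors of $v$ that are not already adjacent. The core graph $G_{\pi,i}$ is obtained from $G$ by contracting $\pi(1),\dots,\pi(i-1)$ in this order. $G_\pi^*$ is the graph on $V$ whose edge set is the union of the edge sets of all $G_{\pi,i}$, $i=1,\dots,n$ (i.e. $G$ together with all edges inserted during the contractions). Let $w:E\to\mathbb{R}_{>0}$ and let $\mathrm{dist}_I(s,t)$ be the shortest $s$–$t$ path length in $(G,w)$. A metric is a map $m$ assigning to every edge of $G_\pi^*$ a value in $\mathbb{R}_{>0}\cup\{\infty\}$; the $m$-length of a path in $G_\pi^*$ is the sum of $m$ over its edges. An up-down path is a path $v_0,\dots,v_k$ in $G_\pi^*$ for which there is $j$ with the ranks strictly increasing along $v_0,\dots,v_j$ and strictly decreasing along $v_j,\dots,v_k$. The perfect metric is $m_P(\{x,y\})=\mathrm{dist}_I(x,y)$ for every edge $\{x,y\}$ of $G_\pi^*$. *)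

theory Defs
  imports Complex_Main
begin

definition simple_graph :: "'a set \<Rightarrow> 'a set set \<Rightarrow> bool" where
  "simple_graph V E \<longleftrightarrow> finite V \<and> (\<forall>e\<in>E. \<exists>x y. x \<in> V \<and> y \<in> V \<and> x \<noteq> y \<and> e = {x, y})"

definition gpath :: "'a set set \<Rightarrow> 'a list \<Rightarrow> bool" where
  "gpath F p \<longleftrightarrow> p \<noteq> [] \<and> distinct p \<and> (\<forall>i. i + 1 < length p \<longrightarrow> {p ! i, p ! (i + 1)} \<in> F)"

definition connected_graph :: "'a set \<Rightarrow> 'a set set \<Rightarrow> bool" where
  "connected_graph V E \<longleftrightarrow> (\<forall>s\<in>V. \<forall>t\<in>V. \<exists>p. gpath E p \<and> hd p = s \<and> last p = t)"

definition plen :: "('a set \<Rightarrow> real) \<Rightarrow> 'a list \<Rightarrow> real" where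
  "plen m p = (\<Sum>i<length p - 1. m {p ! i, p ! (i + 1)})"

definition distI :: "'a set set \<Rightarrow> ('a set \<Rightarrow> real) \<Rightarrow> 'a \<Rightarrow> 'a \<Rightarrow> real" where
  "distI E w s t = Min {plen w p | p. gpath E p \<and> hd p = s \<and> last p = t}"

definition contract :: "'a \<Rightarrow> 'a set set \<Rightarrow> 'a set set" where
  "contract v F = {e \<in> F. v \<notin> e} \<union> {{x, y} | x y. x \<noteq> y \<and> {x, v} \<in> F \<and> {y, v} \<in> F}"

(* core k = edge set of G_{pi,k+1}, i.e. after contracting pi 1, ..., pi k *)
fun core :: "'a set set \<Rightarrow> (nat \<Rightarrow> 'a) \<Rightarrow> nat \<Rightarrow> 'a set set" where
  "core E \<pi> 0 = E"
| "core E \<pi> (Suc k) = contract (\<pi> (Suc k)) (core E \<pi> k)"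

definition Estar :: "'a set \<Rightarrow> 'a set set \<Rightarrow> (nat \<Rightarrow> 'a) \<Rightarrow> 'a set set" where
  "Estar V E \<pi> = (\<Union>k<card V. core E \<pi> k)"

definition rank :: "'a set \<Rightarrow> (nat \<Rightarrow> 'a) \<Rightarrow> 'a \<Rightarrow> nat" where
  "rank V \<pi> v = inv_into {1..card V} \<pi> v"

definition mP :: "'a set set \<Rightarrow> ('a set \<Rightarrow> real) \<Rightarrow> 'a set \<Rightarrow> real" where
  "mP E w e = (SOME d. \<exists>x y. e = {x, y} \<and> d = distI E w x y)"

definition updown :: "('a \<Rightarrow> nat) \<Rightarrow> 'a list \<Rightarrow> bool" where
  "updown r p \<longleftrightarrow> (\<exists>j<length p.
     (\<forall>i. i < j \<longrightarrow> r (p ! i) < r (p ! (i + 1))) \<and>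
     (\<forall>i. j \<le> i \<and> i + 1 < length p \<longrightarrow> r (p ! i) > r (p ! (i + 1))))"

definition Rset :: "'a set \<Rightarrow> 'a set set \<Rightarrow> ('a set \<Rightarrow> real) \<Rightarrow> (nat \<Rightarrow> 'a) \<Rightarrow> 'a set set" where
  "Rset V E w \<pi> = {{x, y} | x y. {x, y} \<in> Estar V E \<pi> \<and> rank V \<pi> x < rank V \<pi> y \<and>
     (\<exists>z. z \<noteq> y \<and> rank V \<pi> z > rank V \<pi> x \<and> {x, z} \<in> Estar V E \<pi> \<and> {z, y} \<in> Estar V E \<pi> \<and>
          mP E w {x, y} = mP E w {x, z} + mP E w {z, y})}"

end

theory Submission
  imports Defs
begin


definition walk :: "'a set set \<Rightarrow> 'a list \<Rightarrow> bool" where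
  "walk F p \<longleftrightarrow> (\<forall>i. i + 1 < length p \<longrightarrow> {p ! i, p ! (i + 1)} \<in> F)"

lemma gpath_walk: "gpath F p \<longleftrightarrow> p \<noteq> [] \<and> distinct p \<and> walk F p"
  by (simp add: gpath_def walk_def)

lemma walk_Nil[simp]: "walk F []" and walk_single[simp]: "walk F [a]"
  by (auto simp: walk_def)

lemma walk_Cons2[simp]: "walk F (a # b # r) \<longleftrightarrow> {a, b} \<in> F \<and> walk F (b # r)"
proof
  assume "walk F (a # b # r)"
  then show "{a, b} \<in> F \<and> walk F (b # r)"
    unfolding walk_def by (metis One_nat_def Suc_less_eq add.commute add_Suc_right length_Cons nth_Cons_0 nth_Cons_Suc plus_1_eq_Suc zero_less_Suc)
next
  assume h: "{a, b} \<in> F \<and> walk F (b # r)"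
  show "walk F (a # b # r)" unfolding walk_def
  proof (intro allI impI)
    fix i assume "i + 1 < length (a # b # r)"
    then show "{(a # b # r) ! i, (a # b # r) ! (i + 1)} \<in> F"
      using h unfolding walk_def by (cases i) auto
  qed
qed

lemma walk_append:
  "walk F xs \<Longrightarrow> walk F ys \<Longrightarrow> xs \<noteq> [] \<Longrightarrow> ys \<noteq> [] \<Longrightarrow> {last xs, hd ys} \<in> F \<Longrightarrow> walk F (xs @ ys)"
proof (induction xs)
  case Nil then show ?case by simp
next
  case (Cons a xs)
  show ?case
  proof (cases xs)
    case Nil
    then show ?thesis using Cons.prems by (cases ys) auto
  next
    case (Cons b r)
    then show ?thesis using Cons.prems Cons.IH by auto
  qed
qed

lemma walk_take: "walk F p \<Longrightarrow> walk F (take k p)"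
  by (auto simp: walk_def)

lemma walk_drop: "walk F p \<Longrightarrow> walk F (drop k p)"
  unfolding walk_def by (auto simp: add.commute add.left_commute)

lemma walk_rev: "walk F p \<Longrightarrow> walk F (rev p)"
  unfolding walk_def
proof (intro allI impI)
  fix i assume w: "\<forall>i. i + 1 < length p \<longrightarrow> {p ! i, p ! (i + 1)} \<in> F" and i: "i + 1 < length (rev p)"
  have "{p ! (length p - Suc (Suc i)), p ! (length p - Suc (Suc i) + 1)} \<in> F"
    using w i by auto
  moreover have "length p - Suc (Suc i) + 1 = length p - Suc i" using i by auto
  ultimately show "{rev p ! i, rev p ! (i + 1)} \<in> F"
    using i by (simp add: rev_nth insert_commute)
qed

lemma gpath_rev: "gpath F p \<Longrightarrow> gpath F (rev p)"
  by (simp add: gpath_walk walk_rev)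

lemma plen_Nil[simp]: "plen m [] = 0" and plen_single[simp]: "plen m [a] = 0"
  by (auto simp: plen_def)

lemma plen_Cons2[simp]: "plen m (a # b # r) = m {a, b} + plen m (b # r)"
  unfolding plen_def
  apply (simp del: sum.lessThan_Suc)
  apply (subst sum.lessThan_Suc_shift)
  apply simp
  done

lemma plen_append:
  "xs \<noteq> [] \<Longrightarrow> ys \<noteq> [] \<Longrightarrow> plen m (xs @ ys) = plen m xs + m {last xs, hd ys} + plen m ys"
proof (induction xs)
  case Nil then show ?case by simp
next
  case (Cons a xs)
  show ?case
  proof (cases xs)
    case Nil
    then show ?thesis using Cons.prems by (cases ys) auto
  next
    case (Cons b r)
    then show ?thesis using Cons.prems Cons.IH by auto
  qed
qed

lemma plen_rev: "plen m (rev p) = plen m p"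
proof (induction p)
  case Nil then show ?case by simp
next
  case (Cons a p)
  show ?case
  proof (cases p)
    case Nil then show ?thesis by simp
  next
    case (Cons b r)
    have "plen m (rev (a # p)) = plen m (rev p @ [a])" by simp
    also have "\<dots> = plen m (rev p) + m {last (rev p), a}"
      using Cons by (subst plen_append) auto
    also have "\<dots> = plen m (a # p)" using Cons.IH Cons by (simp add: insert_commute)
    finally show ?thesis .
  qed
qed

lemma plen_take_drop:
  assumes "k < length p"
  shows "plen m p = plen m (take (Suc k) p) + plen m (drop k p)"
proof (cases "Suc k = length p")
  case True
  then have "drop k p = [p ! k]"
    by (metis Cons_nth_drop_Suc assms drop_all order_refl)
  then show ?thesis using True by simp
next
  case False
  then have sk: "Suc k < length p" using assms by simp
  have p: "p = take (Suc k) p @ drop (Suc k) p" by simp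
  have lt: "last (take (Suc k) p) = p ! k"
    using assms by (subst last_conv_nth) auto
  have hd: "hd (drop (Suc k) p) = p ! Suc k" using sk by (simp add: hd_drop_conv_nth)
  have d: "drop k p = p ! k # p ! Suc k # drop (Suc (Suc k)) p"
    using sk assms by (metis Cons_nth_drop_Suc)
  have d2: "drop (Suc k) p = p ! Suc k # drop (Suc (Suc k)) p"
    using sk by (metis Cons_nth_drop_Suc)
  have "plen m p = plen m (take (Suc k) p) + m {p ! k, p ! Suc k} + plen m (drop (Suc k) p)"
    proof -
    have pne: "p \<noteq> []" using assms by auto
    then show ?thesis using plen_append[of "take (Suc k) p" "drop (Suc k) p" m] sk lt hd by simp
  qed
  then show ?thesis using d d2 by simp
qed

lemma plen_nonneg:
  assumes "walk F p" "\<forall>e\<in>F. m e \<ge> 0" shows "plen m p \<ge> 0"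
  using assms unfolding plen_def walk_def by (auto intro: sum_nonneg)

lemma walk_suffix: "walk F (xs @ ys) \<Longrightarrow> walk F ys"
  using walk_drop[of F "xs @ ys" "length xs"] by simp

lemma walk_prefix: "walk F (xs @ ys) \<Longrightarrow> walk F xs"
  using walk_take[of F "xs @ ys" "length xs"] by simp

lemma shortcut:
  assumes "walk F p" "p \<noteq> []" "\<forall>e\<in>F. m e \<ge> 0"
  shows "\<exists>q. gpath F q \<and> hd q = hd p \<and> last q = last p \<and> plen m q \<le> plen m p \<and> set q \<subseteq> set p"
  using assms
proof (induction p)
  case Nil then show ?case by simp
next
  case (Cons a p)
  show ?case
  proof (cases p)
    case Nil
    then show ?thesis by (intro exI[of _ "[a]"]) (simp add: gpath_def)
  next
    case (Cons b r)
    with Cons.prems have ab: "{a, b} \<in> F" and wp: "walk F p" by auto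
    from Cons.IH[OF wp] Cons Cons.prems obtain q where
      q: "gpath F q" "hd q = b" "last q = last p" "plen m q \<le> plen m p" "set q \<subseteq> set p" by auto
    then obtain c r' where qc: "q = b # r'" by (cases q) (auto simp: gpath_def)
    show ?thesis
    proof (cases "a \<in> set q")
      case False
      have "gpath F (a # q)" using q False ab qc by (auto simp: gpath_walk)
      moreover have "plen m (a # q) \<le> plen m (a # p)" using q qc Cons by simp
      ultimately show ?thesis using q qc Cons by (intro exI[of _ "a # q"]) auto
    next
      case True
      then obtain xs ys where xy: "q = xs @ a # ys" by (meson split_list)
      have g: "gpath F (a # ys)" using q xy by (auto simp: gpath_walk dest: walk_suffix)
      have "plen m (a # ys) \<le> plen m q"
      proof (cases "xs = []")
        case True then show ?thesis using xy by simp
      next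
        case False
        have wq: "walk F q" using q by (simp add: gpath_walk)
        have "walk F (xs @ [a])" using wq xy walk_prefix[of F "xs @ [a]" ys] by simp
        moreover have "xs @ [a] = butlast xs @ [last xs, a]" using False
          by (metis append_butlast_last_id append_Cons append_assoc append_Nil)
        ultimately have "{last xs, a} \<in> F" using walk_suffix[of F "butlast xs" "[last xs, a]"]
          by simp
        moreover have "plen m xs \<ge> 0" using wq xy walk_prefix[of F xs "a # ys"] Cons.prems
          by (auto intro: plen_nonneg)
        ultimately show ?thesis using xy False Cons.prems plen_append[of xs "a # ys" m] by force
      qed
      moreover have "m {a, b} \<ge> 0" using ab Cons.prems by auto
      ultimately have "plen m (a # ys) \<le> plen m (a # p)" using q Cons by simp
      then show ?thesis using g q xy Cons by (intro exI[of _ "a # ys"]) (auto simp: last_append)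
    qed
  qed
qed

lemma updown_rev:
  assumes "updown r p" shows "updown r (rev p)"
proof -
  from assms obtain j where j: "j < length p"
    and inc: "\<forall>i. i < j \<longrightarrow> r (p ! i) < r (p ! (i + 1))"
    and dec: "\<forall>i. j \<le> i \<and> i + 1 < length p \<longrightarrow> r (p ! i) > r (p ! (i + 1))"
    unfolding updown_def by blast
  let ?L = "length p"
  show ?thesis unfolding updown_def
  proof (intro exI[of _ "?L - 1 - j"] conjI allI impI)
    show "?L - 1 - j < length (rev p)" using j by simp
  next
    fix i assume i: "i < ?L - 1 - j"
    have "r (p ! (?L - Suc (Suc i))) > r (p ! (?L - Suc (Suc i) + 1))"
    proof -
      have "j \<le> ?L - Suc (Suc i)" "?L - Suc (Suc i) + 1 < ?L" using i by auto
      then show ?thesis using dec by blast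
    qed
    moreover have "?L - Suc (Suc i) + 1 = ?L - Suc i" using i by auto
    ultimately show "r (rev p ! i) < r (rev p ! (i + 1))" using i by (simp add: rev_nth)
  next
    fix i assume i: "?L - 1 - j \<le> i \<and> i + 1 < length (rev p)"
    have "r (p ! (?L - Suc (Suc i))) < r (p ! (?L - Suc (Suc i) + 1))"
    proof -
      have "?L - Suc (Suc i) < j" using i by auto
      then show ?thesis using inc by blast
    qed
    moreover have "?L - Suc (Suc i) + 1 = ?L - Suc i" using i by auto
    ultimately show "r (rev p ! i) > r (rev p ! (i + 1))" using i by (simp add: rev_nth)
  qed
qed

lemma nv_updown:
  assumes "p \<noteq> []"
    and "\<forall>i. Suc (Suc i) < length p \<longrightarrow> \<not> (r (p ! i) > r (p ! Suc i) \<and> r (p ! Suc i) < r (p ! Suc (Suc i)))"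
    and "\<forall>i. Suc i < length p \<longrightarrow> r (p ! i) \<noteq> r (p ! Suc i)"
  shows "updown r p"
  using assms
proof (induction p)
  case Nil then show ?case by simp
next
  case (Cons a p)
  show ?case
  proof (cases "p = []")
    case True then show ?thesis by (auto simp: updown_def)
  next
    case False
    have h2: "\<forall>i. Suc (Suc i) < length p \<longrightarrow> \<not> (r (p ! i) > r (p ! Suc i) \<and> r (p ! Suc i) < r (p ! Suc (Suc i)))"
      using Cons.prems(2) by (metis Suc_less_eq length_Cons nth_Cons_Suc)
    have h3: "\<forall>i. Suc i < length p \<longrightarrow> r (p ! i) \<noteq> r (p ! Suc i)"
      using Cons.prems(3) by (metis Suc_less_eq length_Cons nth_Cons_Suc)
    from Cons.IH[OF False h2 h3] obtain j where j: "j < length p"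
      and inc: "\<forall>i. i < j \<longrightarrow> r (p ! i) < r (p ! (i + 1))"
      and dec: "\<forall>i. j \<le> i \<and> i + 1 < length p \<longrightarrow> r (p ! i) > r (p ! (i + 1))"
      unfolding updown_def by blast
    have ne: "r a \<noteq> r (p ! 0)" using Cons.prems(3)[rule_format, of 0] False by simp
    show ?thesis
    proof (cases "r a < r (p ! 0)")
      case True
      show ?thesis unfolding updown_def
      proof (intro exI[of _ "Suc j"] conjI allI impI)
        show "Suc j < length (a # p)" using j by simp
      next
        fix i assume "i < Suc j"
        then show "r ((a # p) ! i) < r ((a # p) ! (i + 1))"
          using True inc by (cases i) auto
      next
        fix i assume "Suc j \<le> i \<and> i + 1 < length (a # p)"
        then show "r ((a # p) ! i) > r ((a # p) ! (i + 1))"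
          using dec by (cases i) auto
      qed
    next
      case False
      then have gt: "r a > r (p ! 0)" using ne by simp
      have j0: "j = 0"
      proof (rule ccontr)
        assume "j \<noteq> 0"
        then have "r (p ! 0) < r (p ! 1)" "Suc 0 < length p" using inc j by auto
        then show False using Cons.prems(2)[rule_format, of 0] gt by auto
      qed
      show ?thesis unfolding updown_def
      proof (intro exI[of _ 0] conjI allI impI)
        fix i assume "0 \<le> i \<and> i + 1 < length (a # p)"
        then show "r ((a # p) ! i) > r ((a # p) ! (i + 1))"
          using dec gt j0 by (cases i) auto
      qed auto
    qed
  qed
qed

lemma dec_chain:
  assumes "\<forall>i. i + 1 < length p \<longrightarrow> r (p ! i) > r (p ! (i + 1))" "0 < k" "k < length p"
  shows "r (p ! 0) > (r (p ! k) :: nat)"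
  using assms(2,3)
proof (induction k)
  case 0 then show ?case by simp
next
  case (Suc k)
  show ?case
  proof (cases k)
    case 0 then show ?thesis using assms(1) Suc by auto
  next
    case (Suc k')
    then show ?thesis using Suc.IH Suc.prems assms(1)[rule_format, of k] by auto
  qed
qed



locale CH =
  fixes V :: "'a set" and E :: "'a set set" and w :: "'a set \<Rightarrow> real" and \<pi> :: "nat \<Rightarrow> 'a"
  assumes sg: "simple_graph V E"
    and conn: "connected_graph V E"
    and wpos: "\<forall>e\<in>E. w e > 0"
    and bij: "bij_betw \<pi> {1..card V} V"
begin

abbreviation "n \<equiv> card V"
abbreviation "rk \<equiv> rank V \<pi>"
abbreviation "d \<equiv> distI E w"
abbreviation "M \<equiv> mP E w"
abbreviation "ES \<equiv> Estar V E \<pi>"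

lemma finV: "finite V" using sg by (simp add: simple_graph_def)

lemma E_edge: "{a, b} \<in> E \<Longrightarrow> a \<in> V \<and> b \<in> V \<and> a \<noteq> b"
  using sg unfolding simple_graph_def by (metis doubleton_eq_iff insert_absorb2 singleton_insert_inj_eq)

lemma walkE_set: assumes "walk E p" "hd p \<in> V" shows "set p \<subseteq> V"
proof
  fix v assume "v \<in> set p"
  then obtain k where k: "k < length p" "v = p ! k" by (auto simp: in_set_conv_nth)
  show "v \<in> V"
  proof (cases "k + 1 < length p")
    case True then show ?thesis using assms k E_edge unfolding walk_def by blast
  next
    case False
    show ?thesis
    proof (cases k)
      case 0 then show ?thesis using assms k by (simp add: hd_conv_nth)
    next
      case (Suc k')
      then have "{p ! k', p ! (k' + 1)} \<in> E" using assms k unfolding walk_def by auto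
      then show ?thesis using E_edge k Suc by auto
    qed
  qed
qed

definition PS where "PS s t = {p. gpath E p \<and> hd p = s \<and> last p = t}"

lemma PS_finite: "s \<in> V \<Longrightarrow> finite (PS s t)"
proof -
  assume s: "s \<in> V"
  have "PS s t \<subseteq> {xs. set xs \<subseteq> V \<and> length xs \<le> n}"
  proof
    fix p assume "p \<in> PS s t"
    then have g: "gpath E p" "hd p = s" by (auto simp: PS_def)
    then have "set p \<subseteq> V" using walkE_set s by (auto simp: gpath_walk)
    moreover have "length p \<le> n" using g `set p \<subseteq> V` finV
      by (metis card_mono distinct_card gpath_def)
    ultimately show "p \<in> {xs. set xs \<subseteq> V \<and> length xs \<le> n}" by simp
  qed
  then show ?thesis using finite_lists_length_le[OF finV] finite_subset by blast
qed

lemma d_alt: "d s t = Min (plen w ` PS s t)"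
  unfolding distI_def PS_def by (simp add: image_def) (metis)

lemma PS_ne: "s \<in> V \<Longrightarrow> t \<in> V \<Longrightarrow> PS s t \<noteq> {}"
  using conn unfolding connected_graph_def PS_def by blast

lemma dist_le: "s \<in> V \<Longrightarrow> gpath E p \<Longrightarrow> hd p = s \<Longrightarrow> last p = t \<Longrightarrow> d s t \<le> plen w p"
  unfolding d_alt using PS_finite by (auto simp: PS_def intro!: Min_le)

lemma dist_ex: "s \<in> V \<Longrightarrow> t \<in> V \<Longrightarrow> \<exists>p. gpath E p \<and> hd p = s \<and> last p = t \<and> plen w p = d s t"
proof -
  assume st: "s \<in> V" "t \<in> V"
  have "Min (plen w ` PS s t) \<in> plen w ` PS s t"
    using PS_finite PS_ne st by (intro Min_in) auto
  then show ?thesis unfolding d_alt PS_def by auto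
qed

lemma d_sym: "d s t = d t s"
proof -
  have "{plen w p |p. gpath E p \<and> hd p = s \<and> last p = t} = {plen w p |p. gpath E p \<and> hd p = t \<and> last p = s}"
  proof -
    have *: "\<And>s t. {plen w p |p. gpath E p \<and> hd p = s \<and> last p = t} \<subseteq> {plen w p |p. gpath E p \<and> hd p = t \<and> last p = s}"
    proof
      fix s t x assume "x \<in> {plen w p |p. gpath E p \<and> hd p = s \<and> last p = t}"
      then obtain p where p: "gpath E p" "hd p = s" "last p = t" "x = plen w p" by auto
      then have "p \<noteq> []" by (simp add: gpath_def)
      then have "gpath E (rev p) \<and> hd (rev p) = t \<and> last (rev p) = s \<and> x = plen w (rev p)"
        using p by (simp add: gpath_rev plen_rev hd_rev last_rev)
      then show "x \<in> {plen w p |p. gpath E p \<and> hd p = t \<and> last p = s}" by blast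
    qed
    show ?thesis using *[of s t] *[of t s] by blast
  qed
  then show ?thesis unfolding distI_def by simp
qed

lemma distinct_hd_last: "distinct p \<Longrightarrow> p \<noteq> [] \<Longrightarrow> hd p = last p \<Longrightarrow> p = [hd p]"
proof -
  assume a: "distinct p" "p \<noteq> []" "hd p = last p"
  show ?thesis
  proof (rule ccontr)
    assume "p \<noteq> [hd p]"
    then have "length p \<ge> 2" using a(2) by (cases p) (auto, case_tac list, auto)
    then have "p ! 0 \<noteq> p ! (length p - 1)" using a(1) by (subst nth_eq_iff_index_eq) auto
    then show False using a by (simp add: hd_conv_nth last_conv_nth)
  qed
qed

lemma d_self[simp]: "d s s = 0"
proof -
  have "{plen w p |p. gpath E p \<and> hd p = s \<and> last p = s} = {0}"
  proof
    show "{plen w p |p. gpath E p \<and> hd p = s \<and> last p = s} \<subseteq> {0}"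
    proof
      fix x assume "x \<in> {plen w p |p. gpath E p \<and> hd p = s \<and> last p = s}"
      then obtain p where "gpath E p" "hd p = s" "last p = s" "x = plen w p" by auto
      then have "p = [hd p]" using distinct_hd_last[of p] by (auto simp: gpath_def)
      then show "x \<in> {0}" using `x = plen w p` by (metis plen_single singletonI)
    qed
    have "gpath E [s]" by (simp add: gpath_def)
    then show "{0} \<subseteq> {plen w p |p. gpath E p \<and> hd p = s \<and> last p = s}"
      by (auto intro!: exI[of _ "[s]"])
  qed
  then show ?thesis unfolding distI_def by simp
qed

lemma w_nonneg: "\<forall>e\<in>E. w e \<ge> 0" using wpos by auto

lemma d_nonneg: "s \<in> V \<Longrightarrow> t \<in> V \<Longrightarrow> 0 \<le> d s t"
  using dist_ex plen_nonneg w_nonneg by (metis gpath_walk)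

lemma d_pos: assumes "s \<in> V" "t \<in> V" "s \<noteq> t" shows "0 < d s t"
proof -
  obtain p where p: "gpath E p" "hd p = s" "last p = t" "plen w p = d s t" using dist_ex assms by blast
  then obtain a b r where abr: "p = a # b # r"
    using assms(3) by (cases p; cases "tl p") (auto simp: gpath_def)
  then have "{a, b} \<in> E" "walk E (b # r)" using p by (auto simp: gpath_walk)
  then have "w {a, b} > 0" "plen w (b # r) \<ge> 0" using wpos plen_nonneg w_nonneg by auto
  then show ?thesis using p abr by simp
qed

lemma d_tri: assumes "s \<in> V" "u \<in> V" "t \<in> V" shows "d s t \<le> d s u + d u t"
proof -
  obtain p1 where p1: "gpath E p1" "hd p1 = s" "last p1 = u" "plen w p1 = d s u" using dist_ex assms by blast
  obtain p2 where p2: "gpath E p2" "hd p2 = u" "last p2 = t" "plen w p2 = d u t" using dist_ex assms by blast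
  have ex: "\<exists>p. walk E p \<and> p \<noteq> [] \<and> hd p = s \<and> last p = t \<and> plen w p = plen w p1 + plen w p2"
  proof (cases "tl p2")
    case Nil
    then have "p2 = [u]" using p2 by (cases p2) (auto simp: gpath_def)
    then show ?thesis using p1 p2 by (intro exI[of _ p1]) (auto simp: gpath_walk)
  next
    case (Cons c r)
    then have p2e: "p2 = u # c # r" using p2 by (cases p2) (auto simp: gpath_def)
    have "walk E (p1 @ c # r)" using p1 p2 p2e
      by (intro walk_append) (auto simp: gpath_walk)
    moreover have "plen w (p1 @ c # r) = plen w p1 + plen w p2"
      using p1 p2e by (subst plen_append) (auto simp: gpath_def)
    ultimately show ?thesis using p1 p2 p2e by (intro exI[of _ "p1 @ c # r"]) (auto simp: gpath_def)
  qed
  then obtain p where p: "walk E p" "p \<noteq> []" "hd p = s" "last p = t" "plen w p = d s u + d u t"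
    using p1 p2 by auto
  from shortcut[OF p(1,2) w_nonneg] obtain q where
    "gpath E q" "hd q = hd p" "last q = last p" "plen w q \<le> plen w p" by blast
  then show ?thesis using dist_le[of s q t] p assms by auto
qed

lemma d_le_w: "{a, b} \<in> E \<Longrightarrow> d a b \<le> w {a, b}"
  using dist_le[of a "[a, b]" b] E_edge by (auto simp: gpath_def)

lemma M_eq: "M {x, y} = d x y"
  unfolding mP_def by (rule some_equality) (auto simp: doubleton_eq_iff d_sym)

end


context CH begin

lemma pi_img: "\<pi> ` {1..n} = V" using bij by (simp add: bij_betw_def)
lemma pi_inj: "inj_on \<pi> {1..n}" using bij by (simp add: bij_betw_def)

lemma rk_in: "v \<in> V \<Longrightarrow> rk v \<in> {1..n}"
  unfolding rank_def using pi_img by (metis inv_into_into)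

lemma pi_rk: "v \<in> V \<Longrightarrow> \<pi> (rk v) = v"
  unfolding rank_def using pi_img by (metis f_inv_into_f)

lemma rk_pi: "l \<in> {1..n} \<Longrightarrow> rk (\<pi> l) = l"
  unfolding rank_def using pi_inj by (metis inv_into_f_f)

lemma rk_inj: "u \<in> V \<Longrightarrow> v \<in> V \<Longrightarrow> rk u = rk v \<Longrightarrow> u = v"
  using pi_rk by metis

lemma pi_in: "l \<in> {1..n} \<Longrightarrow> \<pi> l \<in> V" using pi_img by blast

lemma core_edges: "e \<in> core E \<pi> k \<Longrightarrow> \<exists>a b. a \<in> V \<and> b \<in> V \<and> a \<noteq> b \<and> e = {a, b}"
proof (induction k arbitrary: e)
  case 0 then show ?case using sg by (auto simp: simple_graph_def)
next
  case (Suc k)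
  show ?case
  proof (cases "e \<in> core E \<pi> k")
    case True then show ?thesis using Suc.IH by blast
  next
    case False
    then obtain x y where xy: "e = {x, y}" "x \<noteq> y" "{x, \<pi> (Suc k)} \<in> core E \<pi> k" "{y, \<pi> (Suc k)} \<in> core E \<pi> k"
      using Suc.prems by (auto simp: contract_def)
    have "x \<in> V" using Suc.IH[OF xy(3)] by (metis doubleton_eq_iff)
    moreover have "y \<in> V" using Suc.IH[OF xy(4)] by (metis doubleton_eq_iff)
    ultimately show ?thesis using xy by blast
  qed
qed

lemma core_pair: "{a, b} \<in> core E \<pi> k \<Longrightarrow> a \<in> V \<and> b \<in> V \<and> a \<noteq> b"
  using core_edges by (metis doubleton_eq_iff)

lemma core_avoid: "l \<in> {1..n} \<Longrightarrow> l \<le> k \<Longrightarrow> e \<in> core E \<pi> k \<Longrightarrow> \<pi> l \<notin> e"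
proof (induction k arbitrary: e)
  case 0 then show ?case by simp
next
  case (Suc k)
  show ?case
  proof (cases "l = Suc k")
    case True
    show ?thesis
    proof
      assume pe: "\<pi> l \<in> e"
      from Suc.prems(3) True have "e \<in> contract (\<pi> l) (core E \<pi> k)" by simp
      then obtain x y where "e = {x, y}" "x \<noteq> y" "{x, \<pi> l} \<in> core E \<pi> k" "{y, \<pi> l} \<in> core E \<pi> k"
        using pe by (auto simp: contract_def)
      then show False using pe core_pair by (metis insert_absorb2 insert_iff singletonD)
    qed
  next
    case False
    then have lk: "l \<le> k" using Suc.prems by simp
    show ?thesis
    proof
      assume pe: "\<pi> l \<in> e"
      from Suc.prems(3) have "e \<in> contract (\<pi> (Suc k)) (core E \<pi> k)" by simp
      then consider "e \<in> core E \<pi> k" | x y where "e = {x, y}" "{x, \<pi> (Suc k)} \<in> core E \<pi> k" "{y, \<pi> (Suc k)} \<in> core E \<pi> k"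
        by (auto simp: contract_def)
      then show False
      proof cases
        case 1 then show False using Suc.IH[OF Suc.prems(1) lk] pe by blast
      next
        case 2
        then show False using Suc.IH[OF Suc.prems(1) lk] pe by blast
      qed
    qed
  qed
qed

lemma core_persist:
  assumes "e \<in> core E \<pi> k" "k \<le> k'" "\<forall>l. k < l \<and> l \<le> k' \<longrightarrow> \<pi> l \<notin> e"
  shows "e \<in> core E \<pi> k'"
  using assms(2,3)
proof (induction k' rule: dec_induct)
  case base then show ?case using assms(1) by simp
next
  case (step k'')
  then have "e \<in> core E \<pi> k''" by auto
  moreover have "\<pi> (Suc k'') \<notin> e" using step by auto
  ultimately show ?case by (simp add: contract_def)
qed

lemma ES_pair: "{a, b} \<in> ES \<Longrightarrow> a \<in> V \<and> b \<in> V \<and> a \<noteq> b"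
  unfolding Estar_def using core_pair by blast

lemma E_sub_ES: "E \<subseteq> ES"
proof
  fix e assume e: "e \<in> E"
  then obtain a b where "a \<in> V" using sg by (auto simp: simple_graph_def)
  then have "0 < n" using finV card_gt_0_iff by blast
  then show "e \<in> ES" using e unfolding Estar_def by force
qed

lemma clique:
  assumes x: "x \<in> V" and xu: "{x, u} \<in> ES" and xz: "{x, z} \<in> ES"
    and ru: "rk u > rk x" and rz: "rk z > rk x" and uz: "u \<noteq> z"
  shows "{u, z} \<in> ES"
proof -
  define r where "r = rk x"
  have r: "r \<in> {1..n}" "\<pi> r = x" using rk_in pi_rk x r_def by auto
  have uV: "u \<in> V" and zV: "z \<in> V" using ES_pair xu xz by auto
  have rn: "r < n" using rk_in[OF uV] ru r_def by auto
  have up: "{x, v} \<in> core E \<pi> (r - 1)" if xv: "{x, v} \<in> ES" and rv: "rk v > r" for v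
  proof -
    from xv obtain k where k: "k < n" "{x, v} \<in> core E \<pi> k" unfolding Estar_def by blast
    have vV: "v \<in> V" using ES_pair xv by auto
    have kr: "k < r"
    proof (rule ccontr)
      assume "\<not> k < r"
      then have "\<pi> r \<notin> {x, v}" using core_avoid[OF r(1) _ k(2)] by simp
      then show False using r by simp
    qed
    show ?thesis
    proof (rule core_persist[OF k(2)])
      show "k \<le> r - 1" using kr by simp
      show "\<forall>l. k < l \<and> l \<le> r - 1 \<longrightarrow> \<pi> l \<notin> {x, v}"
      proof (intro allI impI)
        fix l assume l: "k < l \<and> l \<le> r - 1"
        then have l1: "l \<in> {1..n}" using r kr by auto
        have "rk (\<pi> l) = l" using rk_pi[OF l1] .
        then have "\<pi> l \<noteq> x" "\<pi> l \<noteq> v" using l r_def rv kr by auto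
        then show "\<pi> l \<notin> {x, v}" by simp
      qed
    qed
  qed
  have "{x, u} \<in> core E \<pi> (r - 1)" "{x, z} \<in> core E \<pi> (r - 1)"
    using up[OF xu] up[OF xz] ru rz r_def by auto
  then have A: "{u, \<pi> r} \<in> core E \<pi> (r - 1)" "{z, \<pi> r} \<in> core E \<pi> (r - 1)"
    using r(2) by (auto simp: insert_commute)
  have "{u, z} \<in> contract (\<pi> r) (core E \<pi> (r - 1))"
    unfolding contract_def using A uz by blast
  moreover have "r = Suc (r - 1)" using r by auto
  ultimately have "{u, z} \<in> core E \<pi> r" by (metis core.simps(2))
  then show ?thesis unfolding Estar_def using rn by blast
qed

lemma walkES_set: assumes "walk ES p" "hd p \<in> V" shows "set p \<subseteq> V"
proof
  fix v assume "v \<in> set p"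
  then obtain k where k: "k < length p" "v = p ! k" by (auto simp: in_set_conv_nth)
  show "v \<in> V"
  proof (cases "k + 1 < length p")
    case True then show ?thesis using assms k ES_pair unfolding walk_def by blast
  next
    case False
    show ?thesis
    proof (cases k)
      case 0 then show ?thesis using assms k by (simp add: hd_conv_nth)
    next
      case (Suc k')
      then have "{p ! k', p ! (k' + 1)} \<in> ES" using assms k unfolding walk_def by auto
      then show ?thesis using ES_pair k Suc by auto
    qed
  qed
qed

lemma M_nonneg: "\<forall>e\<in>ES. M e \<ge> 0"
proof
  fix e assume "e \<in> ES"
  then obtain a b where "e = {a, b}" "a \<in> V" "b \<in> V" unfolding Estar_def using core_edges by blast
  then show "M e \<ge> 0" using M_eq d_nonneg by simp
qed

lemma walk_d_le:
  assumes "walk ES p" "p \<noteq> []" "hd p \<in> V"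
  shows "d (hd p) (last p) \<le> plen M p"
  using assms
proof (induction p)
  case Nil then show ?case by simp
next
  case (Cons a p)
  show ?case
  proof (cases p)
    case Nil then show ?thesis by simp
  next
    case (Cons b r)
    have ab: "{a, b} \<in> ES" and wp: "walk ES p" using Cons.prems Cons by auto
    have bV: "b \<in> V" using ES_pair ab by auto
    have IH: "d b (last p) \<le> plen M p" using Cons.IH[OF wp] Cons bV by simp
    have lV: "last p \<in> V" using walkES_set[OF wp] Cons bV by auto
    have "d a (last p) \<le> d a b + d b (last p)" using d_tri Cons.prems bV lV by simp
    then show ?thesis using IH Cons by (simp add: M_eq)
  qed
qed

lemma SUB:
  assumes w: "walk ES p" and ne: "p \<noteq> []" and h: "hd p \<in> V"
    and opt: "plen M p = d (hd p) (last p)"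
    and ab: "a \<le> b" "b < length p"
  shows "d (p ! a) (p ! b) = plen M (take (Suc b) p) - plen M (take (Suc a) p)"
proof -
  have sV: "set p \<subseteq> V" using walkES_set w h by blast
  have paV: "p ! a \<in> V" and pbV: "p ! b \<in> V" and lV: "last p \<in> V"
    using sV ab ne by (auto simp: last_conv_nth)
  have e1: "plen M p = plen M (take (Suc b) p) + plen M (drop b p)"
    using plen_take_drop ab by blast
  have e2: "plen M (take (Suc b) p) = plen M (take (Suc a) p) + plen M (drop a (take (Suc b) p))"
    using plen_take_drop[of a "take (Suc b) p" M] ab by (simp add: min_def)
  have l1: "d (hd p) (p ! a) \<le> plen M (take (Suc a) p)"
  proof -
    have "d (hd (take (Suc a) p)) (last (take (Suc a) p)) \<le> plen M (take (Suc a) p)"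
      using walk_d_le[of "take (Suc a) p"] walk_take[OF w] ne h by simp
    moreover have "last (take (Suc a) p) = p ! a" using ab by (subst last_conv_nth) auto
    ultimately show ?thesis using ne by simp
  qed
  have l2: "d (p ! a) (p ! b) \<le> plen M (drop a (take (Suc b) p))"
  proof -
    let ?q = "drop a (take (Suc b) p)"
    have qne: "?q \<noteq> []" using ab by simp
    have hq: "hd ?q = p ! a" using ab by (subst hd_drop_conv_nth) auto
    have "last (take (Suc b) p) = p ! b" using ab by (subst last_conv_nth) auto
    then have lq: "last ?q = p ! b" using ab by (simp add: last_drop)
    show ?thesis using walk_d_le[of ?q] walk_drop[OF walk_take[OF w]] qne hq lq paV by simp
  qed
  have l3: "d (p ! b) (last p) \<le> plen M (drop b p)"
  proof -
    have hq: "hd (drop b p) = p ! b" using ab by (subst hd_drop_conv_nth) auto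
    show ?thesis using walk_d_le[of "drop b p"] walk_drop[OF w] ab hq pbV by simp
  qed
  have hV: "hd p \<in> V" using h .
  have t1: "d (hd p) (last p) \<le> d (hd p) (p ! a) + d (p ! a) (last p)" using d_tri hV paV lV by blast
  have t2: "d (p ! a) (last p) \<le> d (p ! a) (p ! b) + d (p ! b) (last p)" using d_tri paV pbV lV by blast
  show ?thesis using e1 e2 l1 l2 l3 t1 t2 opt by linarith
qed

end


lemma pow2_sum: "(\<Sum>r<N. (2::nat) ^ r) < 2 ^ N"
  by (induction N) auto

context CH begin

definition U where "U s t = {p. gpath ES p \<and> hd p = s \<and> last p = t \<and> updown rk p \<and> plen M p = d s t}"
definition mu :: "'a list \<Rightarrow> nat" where "mu p = (\<Sum>v\<in>set p. (2::nat) ^ rk v)"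

lemma part2_up:
  assumes xy: "{x, y} \<in> ES" "rk x < rk y"
    and p: "gpath ES p" "hd p = x" "last p = y" "updown rk p" "plen M p = d x y"
    and ne: "p \<noteq> [x, y]"
  shows "{x, y} \<in> Rset V E w \<pi>"
proof -
  have xV: "x \<in> V" and yV: "y \<in> V" and xny: "x \<noteq> y" using ES_pair xy by auto
  have pne: "p \<noteq> []" and dp: "distinct p" and wp: "walk ES p" using p by (auto simp: gpath_walk)
  obtain b r where pe: "p = x # b # r"
  proof (cases p)
    case Nil then show ?thesis using pne by simp
  next
    case (Cons a r0)
    then show ?thesis
    proof (cases r0)
      case Nil then show ?thesis using Cons p xny by simp
    next
      case (Cons b r)
      then show ?thesis using `p = a # r0` p that by simp
    qed
  qed
  have rne: "r \<noteq> []" using pe ne p by auto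
  have ly: "last r = y" using p pe rne by simp
  from p(4) obtain j where j: "j < length p"
    and inc: "\<forall>i. i < j \<longrightarrow> rk (p ! i) < rk (p ! (i + 1))"
    and dec: "\<forall>i. j \<le> i \<and> i + 1 < length p \<longrightarrow> rk (p ! i) > rk (p ! (i + 1))"
    unfolding updown_def by blast
  have j0: "j \<noteq> 0"
  proof
    assume "j = 0"
    then have "rk (p ! 0) > rk (p ! (length p - 1))" using dec dec_chain[of p rk "length p - 1"] pe by auto
    moreover have "(b # r) ! length r = y" using ly rne
      by (metis diff_Suc_1 last_ConsR last_conv_nth length_Cons list.distinct(1))
    ultimately show False using pe xy(2) by simp
  qed
  then have rb: "rk x < rk b" using inc pe by force
  have bny: "b \<noteq> y" using dp pe rne ly by (metis distinct.simps(2) last_in_set list.set_intros(2))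
  have xb: "{x, b} \<in> ES" and wb: "walk ES (b # r)" using wp pe by auto
  have bV: "b \<in> V" using ES_pair xb by auto
  have by_: "{b, y} \<in> ES" using clique[OF xV xb xy(1) rb xy(2) bny] .
  have "d b y \<le> plen M (b # r)" using walk_d_le[OF wb] bV ly rne by simp
  moreover have "plen M p = d x b + plen M (b # r)" using pe by (simp add: M_eq)
  moreover have "d x y \<le> d x b + d b y" using d_tri xV bV yV by blast
  ultimately have "M {x, y} = M {x, b} + M {b, y}" using p(5) by (simp add: M_eq)
  then show ?thesis unfolding Rset_def using xy by_ bny rb xb by blast
qed

lemma part2:
  assumes xy: "{x, y} \<in> ES" "{x, y} \<notin> Rset V E w \<pi>"
    and p: "gpath ES p" "hd p = x" "last p = y" "updown rk p" "plen M p = d x y"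
  shows "p = [x, y]"
proof -
  have xV: "x \<in> V" and yV: "y \<in> V" and xny: "x \<noteq> y" using ES_pair xy by auto
  have "rk x \<noteq> rk y" using rk_inj xV yV xny by blast
  then consider "rk x < rk y" | "rk y < rk x" by linarith
  then show ?thesis
  proof cases
    case 1 then show ?thesis using part2_up[OF xy(1) 1 p] xy(2) by blast
  next
    case 2
    have pne: "p \<noteq> []" using p by (simp add: gpath_def)
    have yx: "{y, x} \<in> ES" using xy by (simp add: insert_commute)
    have "gpath ES (rev p)" "hd (rev p) = y" "last (rev p) = x" "updown rk (rev p)"
      "plen M (rev p) = d y x"
      using p pne by (auto simp: gpath_rev hd_rev last_rev updown_rev plen_rev d_sym)
    then have "rev p = [y, x]"
      using part2_up[OF yx 2] xy(2) by (metis insert_commute)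
    then show ?thesis by (metis rev_rev_ident rev.simps append.simps)
  qed
qed

end


context CH begin

lemma walk_mono: "walk F p \<Longrightarrow> F \<subseteq> G \<Longrightarrow> walk G p"
  by (auto simp: walk_def)

lemma P_ne: assumes st: "s \<in> V" "t \<in> V"
  shows "\<exists>p. gpath ES p \<and> hd p = s \<and> last p = t \<and> plen M p = d s t"
proof -
  obtain p where p: "gpath E p" "hd p = s" "last p = t" "plen w p = d s t" using dist_ex st by blast
  have g: "gpath ES p" using p E_sub_ES walk_mono by (auto simp: gpath_walk)
  have "plen M p \<le> plen w p"
    unfolding plen_def
  proof (rule sum_mono)
    fix i assume "i \<in> {..<length p - 1}"
    then have "{p ! i, p ! (i + 1)} \<in> E" using p by (auto simp: gpath_def)
    then show "M {p ! i, p ! (i + 1)} \<le> w {p ! i, p ! (i + 1)}" using d_le_w M_eq by simp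
  qed
  moreover have "d s t \<le> plen M p" using walk_d_le[of p] g p st by (auto simp: gpath_walk)
  ultimately show ?thesis using g p by (intro exI[of _ p]) auto
qed

lemma U_ne: assumes st: "s \<in> V" "t \<in> V" shows "\<exists>p. p \<in> U s t"
proof -
  let ?P = "\<lambda>p. gpath ES p \<and> hd p = s \<and> last p = t \<and> plen M p = d s t"
  obtain p0 where "?P p0" using P_ne st by blast
  from ex_has_least_nat[of ?P p0 length, OF this] obtain p where
    p: "?P p" and pmin: "\<forall>q. ?P q \<longrightarrow> length p \<le> length q" by blast
  have pne: "p \<noteq> []" and dp: "distinct p" and wp: "walk ES p" using p by (auto simp: gpath_walk)
  have sV: "set p \<subseteq> V" using walkES_set wp p st by blast
  have opt: "plen M p = d (hd p) (last p)" using p by simp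
  have edge: "{p ! k, p ! Suc k} \<in> ES" if "Suc k < length p" for k
    using wp that unfolding walk_def by auto
  have "updown rk p"
  proof (rule nv_updown[OF pne])
    show "\<forall>i. Suc i < length p \<longrightarrow> rk (p ! i) \<noteq> rk (p ! Suc i)"
    proof (intro allI impI)
      fix i assume i: "Suc i < length p"
      then have "p ! i \<noteq> p ! Suc i" using dp by (simp add: nth_eq_iff_index_eq)
      moreover have "p ! i \<in> V" "p ! Suc i \<in> V" using sV i by auto
      ultimately show "rk (p ! i) \<noteq> rk (p ! Suc i)" using rk_inj by blast
    qed
    show "\<forall>i. Suc (Suc i) < length p \<longrightarrow> \<not> (rk (p ! i) > rk (p ! Suc i) \<and> rk (p ! Suc i) < rk (p ! Suc (Suc i)))"
    proof (intro allI impI notI)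
      fix k assume k: "Suc (Suc k) < length p"
        and v: "rk (p ! k) > rk (p ! Suc k) \<and> rk (p ! Suc k) < rk (p ! Suc (Suc k))"
      define a b c where "a = p ! k" "b = p ! Suc k" "c = p ! Suc (Suc k)"
      have ba: "{b, a} \<in> ES" using edge[of k] k a_b_c_def by (simp add: insert_commute)
      have bc: "{b, c} \<in> ES" using edge[of "Suc k"] k a_b_c_def by simp
      have bV: "b \<in> V" using sV k a_b_c_def by auto
      have anc: "a \<noteq> c" using dp k a_b_c_def by (simp add: nth_eq_iff_index_eq)
      have ac: "{a, c} \<in> ES" using clique[OF bV ba bc _ _ anc] v a_b_c_def by simp
      define q where "q = take (Suc k) p @ drop (Suc (Suc k)) p"
      have lt: "last (take (Suc k) p) = a" using k a_b_c_def by (subst last_conv_nth) auto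
      have hdd: "hd (drop (Suc (Suc k)) p) = c" using k a_b_c_def by (simp add: hd_drop_conv_nth)
      have tne: "take (Suc k) p \<noteq> []" and dne: "drop (Suc (Suc k)) p \<noteq> []" using k by auto
      have "distinct q" unfolding q_def using dp set_take_disj_set_drop_if_distinct[OF dp, of "Suc k" "Suc (Suc k)"]
        by simp
      moreover have "walk ES q" unfolding q_def
        using walk_append[OF walk_take[OF wp] walk_drop[OF wp] tne dne] lt hdd ac by simp
      ultimately have gq: "gpath ES q" using tne by (simp add: gpath_walk q_def)
      have hq: "hd q = s" using tne p pne unfolding q_def by (simp add: hd_append)
      have lq: "last q = t" using dne p k unfolding q_def by simp
      have "plen M q = plen M (take (Suc k) p) + M {a, c} + plen M (drop (Suc (Suc k)) p)"
        unfolding q_def using plen_append[OF tne dne] lt hdd by simp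
      moreover have "plen M p = plen M (take (Suc (Suc (Suc k))) p) + plen M (drop (Suc (Suc k)) p)"
        using plen_take_drop k by blast
      moreover have "d a c = plen M (take (Suc (Suc (Suc k))) p) - plen M (take (Suc k) p)"
        using SUB[OF wp pne _ opt, of k "Suc (Suc k)"] k p st a_b_c_def by simp
      ultimately have "plen M q = d s t" using p M_eq by simp
      then have "?P q" using gq hq lq by simp
      moreover have "length q < length p" using k unfolding q_def by simp
      ultimately show False using pmin by fastforce
    qed
  qed
  then show ?thesis using p by (auto simp: U_def)
qed

end


context CH begin

lemma no_up_R:
  assumes st: "s \<in> V" "t \<in> V" and pU: "p \<in> U s t" and pmax: "\<forall>q\<in>U s t. mu q \<le> mu p"
    and i: "i + 1 < length p" and rxy: "rk (p ! i) < rk (p ! (i + 1))"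
    and z: "z \<noteq> p ! (i + 1)" "rk z > rk (p ! i)" "{p ! i, z} \<in> ES" "{z, p ! (i + 1)} \<in> ES"
      "M {p ! i, p ! (i + 1)} = M {p ! i, z} + M {z, p ! (i + 1)}"
  shows False
proof -
  define x y where "x = p ! i" "y = p ! (i + 1)"
  have gp: "gpath ES p" "hd p = s" "last p = t" "updown rk p" "plen M p = d s t"
    using pU by (auto simp: U_def)
  have pne: "p \<noteq> []" and dp: "distinct p" and wp: "walk ES p" using gp by (auto simp: gpath_walk)
  have sV: "set p \<subseteq> V" using walkES_set wp gp st by blast
  have opt: "plen M p = d (hd p) (last p)" using gp by simp
  define D where "D k = plen M (take (Suc k) p)" for k
  have SUB': "d (p ! a) (p ! b) = D b - D a" if "a \<le> b" "b < length p" for a b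
    using SUB[OF wp pne _ opt that] gp st D_def by simp
  have inV: "p ! k \<in> V" if "k < length p" for k using sV that by auto
  have Dlt: "D a < D b" if "a < b" "b < length p" for a b
  proof -
    have "p ! a \<noteq> p ! b" using dp that by (simp add: nth_eq_iff_index_eq)
    then have "0 < d (p ! a) (p ! b)" using d_pos inV that by simp
    then show ?thesis using SUB'[of a b] that by simp
  qed
  have xV: "x \<in> V" and yV: "y \<in> V" using inV i x_y_def by auto
  have zV: "z \<in> V" using ES_pair z(3) by auto
  have dxyz: "d x y = d x z + d z y" using z(5) x_y_def by (simp add: M_eq)
  from gp(4) obtain j where j: "j < length p"
    and inc: "\<forall>i. i < j \<longrightarrow> rk (p ! i) < rk (p ! (i + 1))"
    and dec: "\<forall>i. j \<le> i \<and> i + 1 < length p \<longrightarrow> rk (p ! i) > rk (p ! (i + 1))"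
    unfolding updown_def by blast
  have ij: "i < j"
  proof (rule ccontr)
    assume "\<not> i < j"
    then show False using dec[rule_format, of i] i rxy by simp
  qed
  have zp: "z \<notin> set p"
  proof
    assume "z \<in> set p"
    then obtain k where k: "k < length p" "p ! k = z" by (auto simp: in_set_conv_nth)
    have "k \<noteq> i" using k z(2) by auto
    moreover have "k \<noteq> i + 1" using k z(1) by auto
    ultimately consider "i + 1 < k" | "k < i" by linarith
    then show False
    proof cases
      case 1
      have "d x z = D k - D i" using SUB'[of i k] 1 k x_y_def by simp
      moreover have "d y z = D k - D (i + 1)" using SUB'[of "i + 1" k] 1 k x_y_def by simp
      moreover have "d x y = D (i + 1) - D i" using SUB'[of i "i + 1"] i x_y_def by simp
      moreover have "D (i + 1) < D k" using Dlt 1 k by simp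
      ultimately show False using dxyz d_sym[of z y] by linarith
    next
      case 2
      have "d z x = D i - D k" using SUB'[of k i] 2 i k x_y_def by simp
      moreover have "d z y = D (i + 1) - D k" using SUB'[of k "i + 1"] 2 i k x_y_def by simp
      moreover have "d x y = D (i + 1) - D i" using SUB'[of i "i + 1"] i x_y_def by simp
      moreover have "D k < D i" using Dlt 2 i by simp
      ultimately show False using dxyz d_sym[of z x] by linarith
    qed
  qed
  define m where "m = (LEAST k. i < k \<and> k \<le> j \<and> (rk z < rk (p ! k) \<or> k = j))"
  have mprop: "i < m \<and> m \<le> j \<and> (rk z < rk (p ! m) \<or> m = j)"
    unfolding m_def by (rule LeastI[of _ j]) (use ij in simp)
  have mlen: "m < length p" using mprop j by simp
  have mmin: "rk (p ! k) < rk z" if "i < k" "k < m" for k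
  proof -
    have "\<not> (i < k \<and> k \<le> j \<and> (rk z < rk (p ! k) \<or> k = j))"
      using not_less_Least[of k "\<lambda>k. i < k \<and> k \<le> j \<and> (rk z < rk (p ! k) \<or> k = j)"] that m_def by blast
    then have "\<not> rk z < rk (p ! k)" using that mprop by auto
    moreover have "p ! k \<noteq> z" using zp that mlen by auto
    then have "rk (p ! k) \<noteq> rk z" using rk_inj inV zV that mlen by auto
    ultimately show ?thesis by simp
  qed
  have chain: "{z, p ! k} \<in> ES" if "k \<le> m" "i < k" for k
    using that
  proof (induction k)
    case 0 then show ?case by simp
  next
    case (Suc k)
    show ?case
    proof (cases "k = i")
      case True then show ?thesis using z(4) by simp
    next
      case False
      then have ik: "i < k" using Suc by simp
      have zk: "{p ! k, z} \<in> ES" using Suc ik by (simp add: insert_commute)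
      have kk: "{p ! k, p ! Suc k} \<in> ES" using wp Suc mlen unfolding walk_def by auto
      have r1: "rk (p ! k) < rk z" using mmin ik Suc by simp
      have r2: "rk (p ! k) < rk (p ! Suc k)" using inc Suc mprop by simp
      have zn: "z \<noteq> p ! Suc k" using zp Suc mlen by auto
      show ?thesis using clique[OF inV zk kk r1 r2 zn] Suc mlen by simp
    qed
  qed
  define T where "T = take (Suc i) p"
  define R where "R = drop m p"
  define q where "q = T @ z # R"
  have Tne: "T \<noteq> []" and Rne: "R \<noteq> []" using mlen T_def R_def by auto
  have lT: "last T = x" using i x_y_def T_def by (subst last_conv_nth) auto
  have hR: "hd R = p ! m" using mlen R_def by (simp add: hd_drop_conv_nth)
  have Rc: "R = p ! m # drop (Suc m) p" using mlen R_def by (simp add: Cons_nth_drop_Suc)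
  have zm: "{z, p ! m} \<in> ES" using chain mprop by simp
  have xz: "{x, z} \<in> ES" using z(3) x_y_def by simp
  have distq: "distinct q"
  proof -
    have "set T \<inter> set R = {}" using set_take_disj_set_drop_if_distinct[OF dp, of "Suc i" m] mprop T_def R_def by simp
    moreover have "z \<notin> set T" "z \<notin> set R" using zp T_def R_def by (auto dest: in_set_takeD in_set_dropD)
    ultimately show ?thesis using dp T_def R_def q_def by auto
  qed
  have wq: "walk ES q"
  proof -
    have "walk ES R" using walk_drop[OF wp] R_def by simp
    then have "walk ES (z # R)" using Rc zm by (metis walk_Cons2)
    moreover have "walk ES T" using walk_take[OF wp] T_def by simp
    ultimately show ?thesis unfolding q_def using walk_append[of ES T "z # R"] Tne lT xz by simp
  qed
  have gq: "gpath ES q" using distq wq by (simp add: gpath_walk q_def)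
  have hq: "hd q = s" using Tne gp pne unfolding q_def T_def by (simp add: hd_append)
  have lq: "last q = t" using Rne gp mlen unfolding q_def R_def by simp
  have "plen M q = D i + M {x, z} + plen M (z # R)"
    unfolding q_def using plen_append[OF Tne, of "z # R" M] lT T_def D_def by simp
  also have "\<dots> = D i + d x z + d z (p ! m) + plen M R" using Rc by (simp add: M_eq)
  finally have pq: "plen M q = D i + d x z + d z (p ! m) + plen M R" .
  have pp: "plen M p = D m + plen M R" using plen_take_drop[OF mlen] D_def R_def by simp
  have "d z (p ! m) \<le> d z y + d y (p ! m)" using d_tri zV yV inV mlen by blast
  moreover have "d y (p ! m) = D m - D (i + 1)" using SUB'[of "i + 1" m] mprop mlen x_y_def by simp
  moreover have "d x y = D (i + 1) - D i" using SUB'[of i "i + 1"] i x_y_def by simp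
  ultimately have "plen M q \<le> plen M p" using pq pp dxyz by linarith
  moreover have "d s t \<le> plen M q" using walk_d_le[OF wq] gq hq lq st by (simp add: gpath_def)
  ultimately have plq: "plen M q = d s t" using gp by simp
  have lenq: "length q = Suc i + Suc (length p - m)" using q_def T_def R_def i mlen by simp
  have nthq: "q ! k = (if k \<le> i then p ! k else if k = Suc i then z else p ! (k - Suc (Suc i) + m))"
    if "k < length q" for k
  proof -
    consider "k \<le> i" | "k = Suc i" | "Suc (Suc i) \<le> k" by linarith
    then show ?thesis
    proof cases
      case 1 then show ?thesis using i unfolding q_def T_def by (simp add: nth_append)
    next
      case 2 then show ?thesis using i unfolding q_def T_def by (simp add: nth_append)
    next
      case 3
      then have "q ! k = R ! (k - Suc (Suc i))" using i unfolding q_def T_def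
        by (simp add: nth_append)
      then show ?thesis using 3 mlen that lenq R_def by (simp add: add.commute)
    qed
  qed
  have udq: "updown rk q"
  proof (cases "rk z < rk (p ! m)")
    case True
    show ?thesis unfolding updown_def
    proof (intro exI[of _ "Suc (Suc i) + (j - m)"] conjI allI impI)
      show "Suc (Suc i) + (j - m) < length q" using lenq mprop j by arith
    next
      fix k assume k: "k < Suc (Suc i) + (j - m)"
      then have kq: "k + 1 < length q" using lenq mprop j by arith
      consider "k < i" | "k = i" | "k = Suc i" | "Suc (Suc i) \<le> k" by linarith
      then show "rk (q ! k) < rk (q ! (k + 1))"
      proof cases
        case 1 then show ?thesis using nthq[of k] nthq[of "k + 1"] kq inc ij by simp
      next
        case 2 then show ?thesis using nthq[of k] nthq[of "k + 1"] kq z(2) by simp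
      next
        case 3 then show ?thesis using nthq[of k] nthq[of "k + 1"] kq True by simp
      next
        case 4
        then have e: "k + 1 - Suc (Suc i) + m = (k - Suc (Suc i) + m) + 1" by arith
        have "k - Suc (Suc i) + m < j" using 4 k mprop by simp
        then show ?thesis using nthq[of k] nthq[of "k + 1"] kq 4 inc e by simp
      qed
    next
      fix k assume k: "Suc (Suc i) + (j - m) \<le> k \<and> k + 1 < length q"
      then have e: "k + 1 - Suc (Suc i) + m = (k - Suc (Suc i) + m) + 1" by arith
      have "j \<le> k - Suc (Suc i) + m" "k - Suc (Suc i) + m + 1 < length p" using k mprop lenq by auto
      then show "rk (q ! k) > rk (q ! (k + 1))" using nthq[of k] nthq[of "k + 1"] k dec e by simp
    qed
  next
    case False
    then have mj: "m = j" using mprop by simp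
    have "p ! m \<noteq> z" using zp mlen by auto
    then have "rk (p ! m) \<noteq> rk z" using rk_inj inV zV mlen by auto
    then have zgt: "rk (p ! m) < rk z" using False by simp
    show ?thesis unfolding updown_def
    proof (intro exI[of _ "Suc i"] conjI allI impI)
      show "Suc i < length q" using lenq by simp
    next
      fix k assume k: "k < Suc i"
      then have kq: "k + 1 < length q" using lenq by simp
      consider "k < i" | "k = i" using k by linarith
      then show "rk (q ! k) < rk (q ! (k + 1))"
      proof cases
        case 1 then show ?thesis using nthq[of k] nthq[of "k + 1"] kq inc ij by simp
      next
        case 2 then show ?thesis using nthq[of k] nthq[of "k + 1"] kq z(2) by simp
      qed
    next
      fix k assume k: "Suc i \<le> k \<and> k + 1 < length q"
      consider "k = Suc i" | "Suc (Suc i) \<le> k" using k by linarith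
      then show "rk (q ! k) > rk (q ! (k + 1))"
      proof cases
        case 1 then show ?thesis using nthq[of k] nthq[of "k + 1"] k zgt by simp
      next
        case 2
        then have e: "k + 1 - Suc (Suc i) + m = (k - Suc (Suc i) + m) + 1" by arith
        have "j \<le> k - Suc (Suc i) + m" "k - Suc (Suc i) + m + 1 < length p" using k 2 mj lenq by auto
        then show ?thesis using nthq[of k] nthq[of "k + 1"] k 2 dec e by simp
      qed
    qed
  qed
  have qU: "q \<in> U s t" using gq hq lq udq plq by (simp add: U_def)
  define B where "B = drop (Suc i) (take m p)"
  have pdec: "p = T @ B @ R"
  proof -
    have "take m p = T @ B" using mprop unfolding T_def B_def
      by (metis append_take_drop_id min.absorb1 Suc_leI take_take)
    then show ?thesis unfolding R_def by (metis append_assoc append_take_drop_id)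
  qed
  have dTBR: "distinct (T @ B @ R)" using dp pdec by simp
  let ?f = "\<lambda>v. (2::nat) ^ rk v"
  have mup: "mu p = sum ?f (set T) + sum ?f (set B) + sum ?f (set R)"
    unfolding mu_def using dTBR by (subst pdec) (simp add: sum.union_disjoint Int_Un_distrib2 Int_commute)
  have muq: "mu q = sum ?f (set T) + ?f z + sum ?f (set R)"
  proof -
    have "set q = set T \<union> insert z (set R)" unfolding q_def by simp
    moreover have "z \<notin> set T" "z \<notin> set R" using zp pdec by auto
    moreover have "set T \<inter> set R = {}" using dTBR by auto
    ultimately show ?thesis unfolding mu_def by (simp add: sum.union_disjoint)
  qed
  have Brk: "rk v < rk z" if "v \<in> set B" for v
  proof -
    from that obtain l where l: "l < length B" "B ! l = v" by (auto simp: in_set_conv_nth)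
    have "B ! l = p ! (Suc i + l)" "Suc i + l < m" using l mprop mlen unfolding B_def by auto
    then show ?thesis using mmin l by auto
  qed
  have BV: "set B \<subseteq> V" using sV pdec by auto
  have "sum ?f (set B) = sum (\<lambda>r. (2::nat) ^ r) (rk ` set B)"
    using rk_inj BV by (subst sum.reindex) (auto simp: inj_on_def)
  also have "\<dots> \<le> sum (\<lambda>r. (2::nat) ^ r) {..<rk z}"
    using Brk by (intro sum_mono2) auto
  also have "\<dots> < ?f z" using pow2_sum by simp
  finally have "mu q > mu p" using mup muq by simp
  then show False using pmax qU by fastforce
qed

end


context CH begin

lemma U_finite: "s \<in> V \<Longrightarrow> finite (U s t)"
proof -
  assume s: "s \<in> V"
  have "U s t \<subseteq> {xs. set xs \<subseteq> V \<and> length xs \<le> n}"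
  proof
    fix p assume "p \<in> U s t"
    then have g: "gpath ES p" "hd p = s" by (auto simp: U_def)
    then have "set p \<subseteq> V" using walkES_set s by (auto simp: gpath_walk)
    moreover have "length p \<le> n" using g `set p \<subseteq> V` finV
      by (metis card_mono distinct_card gpath_def)
    ultimately show "p \<in> {xs. set xs \<subseteq> V \<and> length xs \<le> n}" by simp
  qed
  then show ?thesis using finite_lists_length_le[OF finV] finite_subset by blast
qed

lemma U_rev: "p \<in> U s t \<Longrightarrow> rev p \<in> U t s"
proof -
  assume "p \<in> U s t"
  then have "gpath ES p" "hd p = s" "last p = t" "updown rk p" "plen M p = d s t" by (auto simp: U_def)
  moreover then have "p \<noteq> []" by (simp add: gpath_def)
  ultimately show ?thesis by (auto simp: U_def gpath_rev hd_rev last_rev updown_rev plen_rev d_sym)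
qed

lemma mu_rev: "mu (rev p) = mu p" by (simp add: mu_def)

lemma part1:
  assumes st: "s \<in> V" "t \<in> V"
  shows "\<exists>p. gpath ES p \<and> hd p = s \<and> last p = t \<and> updown rk p \<and>
            (\<forall>i. i + 1 < length p \<longrightarrow> {p ! i, p ! (i + 1)} \<notin> Rset V E w \<pi>) \<and> plen M p = d s t"
proof -
  have fin: "finite (mu ` U s t)" using U_finite st by simp
  have ne: "mu ` U s t \<noteq> {}" using U_ne st by blast
  obtain p where pU: "p \<in> U s t" and pm: "mu p = Max (mu ` U s t)"
    using Max_in[OF fin ne] by auto
  have pmax: "\<forall>q\<in>U s t. mu q \<le> mu p" using pm fin by simp
  have pmax': "\<forall>q\<in>U t s. mu q \<le> mu (rev p)"
    using pmax U_rev mu_rev by (metis rev_rev_ident)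
  have rU: "rev p \<in> U t s" using U_rev pU .
  have noR: "\<forall>i. i + 1 < length p \<longrightarrow> {p ! i, p ! (i + 1)} \<notin> Rset V E w \<pi>"
  proof (intro allI impI notI)
    fix i assume i: "i + 1 < length p" and R: "{p ! i, p ! (i + 1)} \<in> Rset V E w \<pi>"
    from R obtain a b z where ab: "{p ! i, p ! (i + 1)} = {a, b}" "rk a < rk b"
      and zz: "z \<noteq> b" "rk z > rk a" "{a, z} \<in> ES" "{z, b} \<in> ES" "M {a, b} = M {a, z} + M {z, b}"
      unfolding Rset_def by blast
    from ab(1) consider "p ! i = a" "p ! (i + 1) = b" | "p ! i = b" "p ! (i + 1) = a"
      by (auto simp: doubleton_eq_iff)
    then show False
    proof cases
      case 1
      then show False using no_up_R[OF st pU pmax i, of z] ab zz by simp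
    next
      case 2
      define i' where "i' = length p - Suc (Suc i)"
      have i': "i' + 1 < length (rev p)" using i i'_def by simp
      have e1: "rev p ! i' = p ! (i + 1)" using i i'_def by (simp add: rev_nth Suc_diff_Suc)
      have e2: "rev p ! (i' + 1) = p ! i" using i i'_def by (simp add: rev_nth Suc_diff_Suc)
      show False using no_up_R[OF st(2,1) rU pmax' i', of z] e1 e2 2 ab zz by simp
    qed
  qed
  show ?thesis using pU noR by (intro exI[of _ p]) (auto simp: U_def)
qed

theorem main:
  "(\<forall>s\<in>V. \<forall>t\<in>V. \<exists>p. gpath (Estar V E \<pi>) p \<and> hd p = s \<and> last p = t \<and>
            updown (rank V \<pi>) p \<and>
            (\<forall>i. i + 1 < length p \<longrightarrow> {p ! i, p ! (i + 1)} \<notin> Rset V E w \<pi>) \<and>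
            plen (mP E w) p = distI E w s t)
       \<and> (\<forall>x y. {x, y} \<in> Estar V E \<pi> \<and> {x, y} \<notin> Rset V E w \<pi> \<longrightarrow>
            (\<forall>p. gpath (Estar V E \<pi>) p \<and> hd p = x \<and> last p = y \<and> updown (rank V \<pi>) p \<and>
                 plen (mP E w) p = distI E w x y \<longrightarrow> p = [x, y]))"
  using part1 part2 by blast

end

theorem mainTheorem9:
  fixes V :: "'a set" and E :: "'a set set" and w :: "'a set \<Rightarrow> real" and \<pi> :: "nat \<Rightarrow> 'a"
  assumes "simple_graph V E"
    and "connected_graph V E"
    and "\<forall>e\<in>E. w e > 0"
    and "bij_betw \<pi> {1..card V} V"
  shows "(\<forall>s\<in>V. \<forall>t\<in>V. \<exists>p. gpath (Estar V E \<pi>) p \<and> hd p = s \<and> last p = t \<and>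
            updown (rank V \<pi>) p \<and>
            (\<forall>i. i + 1 < length p \<longrightarrow> {p ! i, p ! (i + 1)} \<notin> Rset V E w \<pi>) \<and>
            plen (mP E w) p = distI E w s t)
       \<and> (\<forall>x y. {x, y} \<in> Estar V E \<pi> \<and> {x, y} \<notin> Rset V E w \<pi> \<longrightarrow>
            (\<forall>p. gpath (Estar V E \<pi>) p \<and> hd p = x \<and> last p = y \<and> updown (rank V \<pi>) p \<and>
                 plen (mP E w) p = distI E w x y \<longrightarrow> p = [x, y]))"
proof -
  interpret CH V E w \<pi> using assms by unfold_locales
  show ?thesis by (rule main)
qed


end
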